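(* Let $X$ be a compact metrizable countable space and $f:X\to X$ a continuous function such that $(X,f)$ is transitive. If $f^p$ is continuous for every $p\in\mathbb N^*$, then the set $P_f$ is finite.
   Context: $(X,f)$ is transitive if some point has dense orbit $\{f^n(x):n\in\mathbb N\}$. $\mathbb N^*$ is the set of free ultrafilters on $\mathbb N$; for $p\in\mathbb N^*$ the $p$-iterate is $f^p(x)=p\text{-}\lim_{n\to\infty}f^n(x)$, where $y=p\text{-}\lim x_n$ means $\{n: x_n\in V\}\in p$ for every neighborhood $V$ of $y$. A point $x$ is periodic if $f^n(x)=x$ for some $n\ge1$, with period $\min\{n\ge1:f^n(x)=x\}$; $P_f$ is the set of all periods of periodic points of $f$. *)

theory Defs
  imports "HOL-Analysis.Analysis"
begin

definition free_ultrafilter :: "nat set set \<Rightarrow> bool" where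
  "free_ultrafilter p \<longleftrightarrow>
     {} \<notin> p \<and>
     (\<forall>A B. A \<in> p \<and> A \<subseteq> B \<longrightarrow> B \<in> p) \<and>
     (\<forall>A B. A \<in> p \<and> B \<in> p \<longrightarrow> A \<inter> B \<in> p) \<and>
     (\<forall>A. A \<in> p \<or> - A \<in> p) \<and>
     (\<forall>A. finite A \<longrightarrow> A \<notin> p)"

definition is_p_limit :: "'a topology \<Rightarrow> nat set set \<Rightarrow> (nat \<Rightarrow> 'a) \<Rightarrow> 'a \<Rightarrow> bool" where
  "is_p_limit X p s y \<longleftrightarrow> y \<in> topspace X \<and>
     (\<forall>V. openin X V \<and> y \<in> V \<longrightarrow> {n. s n \<in> V} \<in> p)"

definition p_iterate :: "'a topology \<Rightarrow> nat set set \<Rightarrow> ('a \<Rightarrow> 'a) \<Rightarrow> 'a \<Rightarrow> 'a" where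
  "p_iterate X p f x = (THE y. is_p_limit X p (\<lambda>n. (f ^^ n) x) y)"

definition transitive_system :: "'a topology \<Rightarrow> ('a \<Rightarrow> 'a) \<Rightarrow> bool" where
  "transitive_system X f \<longleftrightarrow>
     (\<exists>x \<in> topspace X. X closure_of {(f ^^ n) x | n. True} = topspace X)"

definition periodic_point :: "'a topology \<Rightarrow> ('a \<Rightarrow> 'a) \<Rightarrow> 'a \<Rightarrow> bool" where
  "periodic_point X f x \<longleftrightarrow> x \<in> topspace X \<and> (\<exists>n\<ge>1. (f ^^ n) x = x)"

definition period :: "('a \<Rightarrow> 'a) \<Rightarrow> 'a \<Rightarrow> nat" where
  "period f x = (LEAST n. n \<ge> 1 \<and> (f ^^ n) x = x)"

definition periods :: "'a topology \<Rightarrow> ('a \<Rightarrow> 'a) \<Rightarrow> nat set" where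
  "periods X f = {period f x | x. periodic_point X f x}"

end

theory Submission
  imports Defs
begin

lemma ex_ultra:
  fixes F :: "'a filter"
  assumes F: "F \<noteq> bot"
  shows "\<exists>U\<le>F. U \<noteq> bot \<and> (\<forall>P. eventually P U \<or> eventually (\<lambda>x. \<not> P x) U)"
proof -
  let ?R = "{(b, a). a \<noteq> bot \<and> a \<le> b \<and> b \<le> F}"
  have bot_notin_R: "c \<in> Chains ?R \<Longrightarrow> bot \<notin> c" for c
    by (auto simp: Chains_def)
  have [simp]: "Field ?R = {G. G \<noteq> bot \<and> G \<le> F}"
    by (auto simp: Field_def bot_unique)
  have "\<exists>m\<in>Field ?R. \<forall>a\<in>Field ?R. (m, a) \<in> ?R \<longrightarrow> a = m"
  proof (rule Zorns_po_lemma)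
    show "Partial_order ?R"
      by (auto simp: partial_order_on_def preorder_on_def
          antisym_def refl_on_def trans_def Field_def bot_unique)
    show "\<exists>u\<in>Field ?R. \<forall>a\<in>C. (a, u) \<in> ?R" if C: "C \<in> Chains ?R" for C
    proof (simp, intro exI conjI ballI)
      have Inf_C: "Inf C \<noteq> bot" "Inf C \<le> F" if "C \<noteq> {}"
      proof -
        from C that have "Inf C = bot \<longleftrightarrow> (\<exists>x\<in>C. x = bot)"
          unfolding trivial_limit_def by (intro eventually_Inf_base) (auto simp: Chains_def)
        with C show "Inf C \<noteq> bot"
          by (simp add: bot_notin_R)
        from that obtain x where "x \<in> C" by auto
        with C show "Inf C \<le> F"
          by (auto intro!: Inf_lower2[of x] simp: Chains_def)
      qed
      then have [simp]: "inf F (Inf C) = (if C = {} then F else Inf C)"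
        using C by (auto simp add: inf_absorb2)
      from C show "inf F (Inf C) \<noteq> bot"
        by (simp add: F Inf_C)
      from C show "inf F (Inf C) \<le> F"
        by (simp add: Chains_def Inf_C F)
      with C show "inf F (Inf C) \<le> x" "x \<le> F" if "x \<in> C" for x
        using that  by (auto intro: Inf_lower simp: Chains_def)
    qed
  qed
  then obtain U where U: "U \<noteq> bot" "U \<le> F" and max: "\<And>G. G \<noteq> bot \<Longrightarrow> G \<le> U \<Longrightarrow> G = U"
    by auto
  have "eventually P U \<or> eventually (\<lambda>x. \<not> P x) U" for P
  proof (rule disjCI)
    assume "\<not> (\<forall>\<^sub>Fx in U. \<not> P x)"
    then have "inf U (principal {x. P x}) \<noteq> bot"
      by (simp add: trivial_limit_def eventually_inf_principal not_eventually)
    then have E: "inf U (principal {x. P x}) = U"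
      by (rule max) simp
    show "eventually P U"
      by (subst E[symmetric]) (simp add: eventually_inf_principal)
  qed
  with U show ?thesis by blast
qed


lemma fu_UNIV: "free_ultrafilter p \<Longrightarrow> UNIV \<in> p"
  unfolding free_ultrafilter_def by (metis Compl_UNIV_eq)

lemma fu_mono: "free_ultrafilter p \<Longrightarrow> A \<in> p \<Longrightarrow> A \<subseteq> B \<Longrightarrow> B \<in> p"
  unfolding free_ultrafilter_def by blast

lemma fu_Un: "free_ultrafilter p \<Longrightarrow> B \<union> C \<in> p \<Longrightarrow> B \<in> p \<or> C \<in> p"
proof -
  assume fu: "free_ultrafilter p" and BC: "B \<union> C \<in> p"
  show ?thesis
  proof (rule disjCI)
    assume "C \<notin> p"
    then have "- C \<in> p" using fu unfolding free_ultrafilter_def by blast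
    then have "(B \<union> C) \<inter> - C \<in> p" using fu BC unfolding free_ultrafilter_def by blast
    then show "B \<in> p" using fu_mono[OF fu] by blast
  qed
qed

lemma fu_UN: "free_ultrafilter p \<Longrightarrow> (\<Union>r<(m::nat). A r) \<in> p \<Longrightarrow> \<exists>r<m. A r \<in> p"
proof (induction m)
  case 0
  then show ?case unfolding free_ultrafilter_def by simp
next
  case (Suc m)
  have "(\<Union>r<Suc m. A r) = (\<Union>r<m. A r) \<union> A m" by (auto simp: lessThan_Suc)
  then have "(\<Union>r<m. A r) \<in> p \<or> A m \<in> p" using Suc.prems fu_Un by metis
  then show ?case using Suc.IH Suc.prems(1) less_SucI by blast
qed

lemma p_limit_unique:
  assumes H: "Hausdorff_space X" and fu: "free_ultrafilter p"
    and a: "is_p_limit X p s a" and b: "is_p_limit X p s b"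
  shows "a = b"
proof (rule ccontr)
  assume "a \<noteq> b"
  moreover have "a \<in> topspace X" "b \<in> topspace X" using a b unfolding is_p_limit_def by auto
  ultimately obtain U V where UV: "openin X U" "openin X V" "a \<in> U" "b \<in> V" "disjnt U V"
    using H unfolding Hausdorff_space_def by metis
  then have "{n. s n \<in> U} \<in> p" "{n. s n \<in> V} \<in> p" using a b unfolding is_p_limit_def by auto
  then have "{n. s n \<in> U} \<inter> {n. s n \<in> V} \<in> p" using fu unfolding free_ultrafilter_def by blast
  moreover have "{n. s n \<in> U} \<inter> {n. s n \<in> V} = {}" using UV(5) by (auto simp: disjnt_def)
  ultimately show False using fu unfolding free_ultrafilter_def by simp
qed

lemma p_iterate_eq:
  assumes H: "Hausdorff_space X" and fu: "free_ultrafilter p"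
    and a: "is_p_limit X p (\<lambda>n. (f ^^ n) x) a"
  shows "p_iterate X p f x = a"
  unfolding p_iterate_def
  using p_limit_unique[OF H fu] a by blast

lemma continuous_map_funpow: "continuous_map X X f \<Longrightarrow> continuous_map X X (f ^^ k)"
proof (induction k)
  case (Suc k)
  then have "continuous_map X X (f \<circ> (f ^^ k))" by (intro continuous_map_compose) auto
  then show ?case by (simp add: o_def)
qed simp

lemma p_limit_map:
  assumes fu: "free_ultrafilter p" and c: "continuous_map X X g" and a: "is_p_limit X p s a"
  shows "is_p_limit X p (\<lambda>n. g (s n)) (g a)"
  unfolding is_p_limit_def
proof (intro conjI allI impI)
  show "g a \<in> topspace X" using a c unfolding is_p_limit_def continuous_map_def by blast
  fix V assume V: "openin X V \<and> g a \<in> V"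
  then have "openin X {x \<in> topspace X. g x \<in> V}" using c unfolding continuous_map_def by blast
  then have "{n. s n \<in> {x \<in> topspace X. g x \<in> V}} \<in> p"
    using a V unfolding is_p_limit_def by blast
  then show "{n. g (s n) \<in> V} \<in> p" by (rule fu_mono[OF fu]) auto
qed


lemma funpow_comm: "(f ^^ a) ((f ^^ b) x) = (f ^^ (a + b)) x"
  by (simp add: funpow_add)

lemma funpow_mult_fix: "(f ^^ q) w = w \<Longrightarrow> (f ^^ (q * r)) w = w"
  by (metis funpow_mod_eq mod_mult_self1_is_0 funpow_0 mult.commute)

lemma period_shift:
  assumes q: "(f ^^ q) w = w" and q1: "q \<ge> 1"
  shows "period f ((f ^^ r) w) = period f w"
proof -
  have "(f ^^ k) ((f ^^ r) w) = (f ^^ r) w \<longleftrightarrow> (f ^^ k) w = w" for k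
  proof
    assume k: "(f ^^ k) w = w"
    have "(f ^^ k) ((f ^^ r) w) = (f ^^ r) ((f ^^ k) w)" by (simp add: funpow_comm add.commute)
    then show "(f ^^ k) ((f ^^ r) w) = (f ^^ r) w" using k by simp
  next
    assume k: "(f ^^ k) ((f ^^ r) w) = (f ^^ r) w"
    have bk: "(f ^^ (q * r - r)) ((f ^^ r) w) = w"
    proof -
      have "r \<le> q * r" using q1 by simp
      then show ?thesis using funpow_mult_fix[OF q, of r] by (simp add: funpow_comm)
    qed
    have "(f ^^ k) w = (f ^^ k) ((f ^^ (q * r - r)) ((f ^^ r) w))" using bk by simp
    also have "\<dots> = (f ^^ (q * r - r)) ((f ^^ k) ((f ^^ r) w))" by (simp add: funpow_comm ac_simps)
    also have "\<dots> = w" using k bk by simp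
    finally show "(f ^^ k) w = w" .
  qed
  then show ?thesis unfolding period_def by simp
qed

lemma periodic_p_limit:
  assumes fu: "free_ultrafilter p" and w: "w \<in> topspace X" and c: "continuous_map X X f"
    and q: "(f ^^ q) w = w" "q \<ge> 1"
  shows "\<exists>r. is_p_limit X p (\<lambda>n. (f ^^ n) w) ((f ^^ r) w)"
proof -
  have "(\<Union>r<q. {n. n mod q = r}) = UNIV" using q(2) by auto
  then obtain r where r: "r < q" "{n. n mod q = r} \<in> p" using fu_UN[OF fu, of "\<lambda>r. {n. n mod q = r}" q] fu_UNIV[OF fu] by auto
  have "is_p_limit X p (\<lambda>n. (f ^^ n) w) ((f ^^ r) w)"
    unfolding is_p_limit_def
  proof (intro conjI allI impI)
    show "(f ^^ r) w \<in> topspace X" using continuous_map_funpow[OF c, of r] w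
      unfolding continuous_map_def by blast
    fix V assume V: "openin X V \<and> (f ^^ r) w \<in> V"
    show "{n. (f ^^ n) w \<in> V} \<in> p"
      by (rule fu_mono[OF fu r(2)]) (use V funpow_mod_eq[OF q(1)] in auto)
  qed
  then show ?thesis by blast
qed


theorem corollary4p3:
  fixes X :: "'a topology" and f :: "'a \<Rightarrow> 'a"
  assumes "compact_space X" and "metrizable_space X" and "countable (topspace X)"
    and "continuous_map X X f"
    and "transitive_system X f"
    and "\<forall>p. free_ultrafilter p \<longrightarrow> continuous_map X X (p_iterate X p f)"
  shows "finite (periods X f)"
proof -
  have H: "Hausdorff_space X" using assms(2) by (rule metrizable_imp_Hausdorff_space)
  have c: "continuous_map X X f" by fact
  obtain x0 where x0: "x0 \<in> topspace X" and cl: "X closure_of {(f ^^ n) x0 | n. True} = topspace X"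
    using assms(5) unfolding transitive_system_def by blast
  define s where "s n = (f ^^ n) x0" for n
  have rs: "{(f ^^ n) x0 | n. True} = range s" by (auto simp: s_def)
  have cl': "X closure_of range s = topspace X" using cl rs by simp
  have sX: "s n \<in> topspace X" for n
    using continuous_map_funpow[OF c, of n] x0 unfolding s_def continuous_map_def by blast
  have per_eq: "periods X f = period f ` {x. periodic_point X f x}"
    unfolding periods_def by auto
  show ?thesis
  proof (cases "\<exists>y. periodic_point X f y \<and> y \<notin> range s")
    case True
    then obtain y q where y: "y \<in> topspace X" "y \<notin> range s" and q: "(f ^^ q) y = y" "q \<ge> 1"
      unfolding periodic_point_def by blast
    have cluster: "\<exists>n\<ge>N. s n \<in> V" if V: "openin X V" "y \<in> V" for V N
    proof -
      have "closedin X (s ` {..<N})" using H sX by (intro closedin_Hausdorff_finite) auto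
      then have "openin X (V - s ` {..<N})" using V by (intro openin_diff)
      moreover have "y \<in> V - s ` {..<N}" using V y by auto
      moreover have "y \<in> X closure_of range s" using y(1) cl' by simp
      ultimately obtain z where "z \<in> range s" "z \<in> V - s ` {..<N}"
        unfolding in_closure_of by blast
      then obtain n where n: "s n \<in> V" "s n \<notin> s ` {..<N}" by blast
      then have "\<not> n < N" by blast
      then show ?thesis using n by (auto simp: not_less)
    qed
    define F where "F = inf (filtercomap s (nhdsin X y)) sequentially"
    have "F \<noteq> bot"
    proof
      assume "F = bot"
      then have "eventually (\<lambda>_. False) F" by simp
      then obtain P Q where P: "eventually P (filtercomap s (nhdsin X y))" and Q: "eventually Q sequentially"
        and PQ: "\<forall>x. P x \<and> Q x \<longrightarrow> False"
        unfolding F_def eventually_inf by blast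
      from P obtain R where R: "eventually R (nhdsin X y)" "\<forall>x. R (s x) \<longrightarrow> P x"
        unfolding eventually_filtercomap by blast
      from R(1) y(1) obtain V where V: "openin X V" "y \<in> V" "\<forall>x\<in>V. R x"
        unfolding eventually_nhdsin by blast
      from Q obtain N where N: "\<forall>n\<ge>N. Q n" unfolding eventually_sequentially by blast
      from cluster[OF V(1,2)] obtain n where "n \<ge> N" "s n \<in> V" by blast
      then show False using N V R(2) PQ by blast
    qed
    then obtain U where U: "U \<le> F" "U \<noteq> bot" and ultra: "\<And>P. eventually P U \<or> eventually (\<lambda>x. \<not> P x) U"
      using ex_ultra by blast
    define p where "p = {A. eventually (\<lambda>n. n \<in> A) U}"
    have Useq: "U \<le> sequentially" using U(1) unfolding F_def by (meson inf.boundedE)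
    have fu: "free_ultrafilter p"
      unfolding free_ultrafilter_def
    proof (intro conjI allI impI)
      show "{} \<notin> p" using U(2) by (simp add: p_def trivial_limit_def)
      fix A B assume "A \<in> p \<and> A \<subseteq> B" then show "B \<in> p"
        unfolding p_def by (auto elim: eventually_mono)
    next
      fix A B assume "A \<in> p \<and> B \<in> p" then show "A \<inter> B \<in> p"
        unfolding p_def by (auto dest: eventually_conj)
    next
      fix A show "A \<in> p \<or> - A \<in> p" using ultra[of "\<lambda>n. n \<in> A"] unfolding p_def by auto
    next
      fix A :: "nat set" assume A: "finite A"
      have "eventually (\<lambda>n. n \<notin> A) sequentially"
      proof -
        obtain m where m: "\<forall>n\<in>A. n < m" using A finite_nat_set_iff_bounded by blast
        show ?thesis unfolding eventually_sequentially
          by (rule exI[of _ m]) (use m in force)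
      qed
      then have ev: "eventually (\<lambda>n. n \<notin> A) U" by (rule filter_leD[OF Useq])
      show "A \<notin> p"
      proof
        assume "A \<in> p"
        then have "eventually (\<lambda>n. n \<in> A) U" by (simp add: p_def)
        then have "eventually (\<lambda>n. n \<in> A \<and> n \<notin> A) U" using ev by (rule eventually_conj)
        then have "eventually (\<lambda>_. False) U" by simp
        then show False using U(2) by (simp add: trivial_limit_def)
      qed
    qed
    have lim: "is_p_limit X p s y"
      unfolding is_p_limit_def
    proof (intro conjI allI impI)
      show "y \<in> topspace X" by fact
      fix V assume V: "openin X V \<and> y \<in> V"
      have "eventually (\<lambda>x. x \<in> V) (nhdsin X y)"
        using V unfolding eventually_nhdsin by blast
      then have "eventually (\<lambda>n. s n \<in> V) (filtercomap s (nhdsin X y))"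
        by (rule eventually_filtercomapI)
      then have "eventually (\<lambda>n. s n \<in> V) F"
        unfolding F_def by (rule filter_leD[OF inf_le1, rotated])
      then have "eventually (\<lambda>n. s n \<in> V) U" by (rule filter_leD[OF U(1)])
      then show "{n. s n \<in> V} \<in> p" unfolding p_def by simp
    qed
    define g where "g = p_iterate X p f"
    have gc: "continuous_map X X g" using assms(6) fu unfolding g_def by blast
    have gs: "g (s k) = (f ^^ k) y" for k
    proof -
      have "is_p_limit X p (\<lambda>n. (f ^^ k) (s n)) ((f ^^ k) y)"
        by (rule p_limit_map[OF fu continuous_map_funpow[OF c] lim])
      moreover have "(\<lambda>n. (f ^^ k) (s n)) = (\<lambda>n. (f ^^ n) (s k))"
        by (simp add: s_def funpow_comm add.commute)
      ultimately show ?thesis unfolding g_def by (intro p_iterate_eq[OF H fu]) simp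
    qed
    define Orb where "Orb = (\<lambda>r. (f ^^ r) y) ` {..<q}"
    have Ofull: "(f ^^ k) y \<in> Orb" for k
      unfolding Orb_def using funpow_mod_eq[OF q(1), of k] q(2) by (auto intro!: image_eqI[where x="k mod q"])
    have "Orb \<subseteq> topspace X"
      unfolding Orb_def using continuous_map_funpow[OF c] y(1) unfolding continuous_map_def by blast
    then have "closedin X Orb" using H unfolding Orb_def by (intro closedin_Hausdorff_finite) (auto simp: Orb_def)
    then have "closedin X {x \<in> topspace X. g x \<in> Orb}" using gc by (rule closedin_continuous_map_preimage[rotated])
    moreover have "range s \<subseteq> {x \<in> topspace X. g x \<in> Orb}"
    proof
      fix z assume "z \<in> range s"
      then obtain k where "z = s k" by blast
      then show "z \<in> {x \<in> topspace X. g x \<in> Orb}" using sX[of k] gs[of k] Ofull[of k] by simp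
    qed
    ultimately have "X closure_of range s \<subseteq> {x \<in> topspace X. g x \<in> Orb}" by (intro closure_of_minimal)
    then have gO: "g x \<in> Orb" if "x \<in> topspace X" for x using that unfolding cl' by blast
    have "period f w = period f y" if w: "periodic_point X f w" for w
    proof -
      from w obtain qw where wX: "w \<in> topspace X" and qw: "(f ^^ qw) w = w" "qw \<ge> 1"
        unfolding periodic_point_def by blast
      obtain r where "is_p_limit X p (\<lambda>n. (f ^^ n) w) ((f ^^ r) w)"
        using periodic_p_limit[OF fu wX c qw] by blast
      then have gw: "g w = (f ^^ r) w" unfolding g_def by (rule p_iterate_eq[OF H fu])
      obtain b where "g w = (f ^^ b) y" using gO[OF wX] unfolding Orb_def by blast
      then have "(f ^^ r) w = (f ^^ b) y" using gw by simp
      then have "period f ((f ^^ r) w) = period f ((f ^^ b) y)" by simp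
      then show ?thesis using period_shift[OF qw, of r] period_shift[OF q, of b] by simp
    qed
    then have "periods X f \<subseteq> {period f y}" unfolding per_eq by blast
    then show ?thesis by (rule finite_subset) simp
  next
    case False
    show ?thesis
    proof (cases "\<exists>y. periodic_point X f y")
      case False
      have "periods X f = {}" unfolding periods_def using False by blast
      then show ?thesis by simp
    next
      case True
      then obtain y where yp: "periodic_point X f y" by blast
      with \<open>\<not> (\<exists>y. periodic_point X f y \<and> y \<notin> range s)\<close> obtain m where ym: "y = s m" by blast
      from yp obtain q where q: "(f ^^ q) y = y" "q \<ge> 1" unfolding periodic_point_def by blast
      have "range s \<subseteq> s ` {..<m} \<union> (\<lambda>r. (f ^^ r) y) ` {..<q}"
      proof
        fix z assume "z \<in> range s"
        then obtain n where z: "z = s n" by blast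
        show "z \<in> s ` {..<m} \<union> (\<lambda>r. (f ^^ r) y) ` {..<q}"
        proof (cases "n < m")
          case True then show ?thesis using z by blast
        next
          case False
          then have "s n = (f ^^ (n - m)) y" using ym by (simp add: s_def funpow_comm)
          also have "\<dots> = (f ^^ ((n - m) mod q)) y" using funpow_mod_eq[OF q(1)] by simp
          finally show ?thesis using z q(2) by auto
        qed
      qed
      then have "finite (range s)" by (rule finite_subset) simp
      moreover have "{x. periodic_point X f x} \<subseteq> range s"
        using \<open>\<not> (\<exists>y. periodic_point X f y \<and> y \<notin> range s)\<close> by blast
      ultimately have "periods X f \<subseteq> period f ` range s" unfolding per_eq by blast
      then show ?thesis by (rule finite_subset) (use \<open>finite (range s)\<close> in simp)
    qed
  qed
qed

end
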